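(* Let $G_R=(V,E_R)$ be an undirected (unweighted) connected graph on $n$ vertices such that $w^R_{xy}/w^R_{yx}\le c$ for every edge $(x,y)\in E_R$, and let $G_M$ be the clique $K_n$ on $V$. Then for $r>0$ the fixation probability of the two-graph Moran process with resident graph $G_R$ and mutant graph $G_M$ satisfies $$f_{G_R,G_M}(r)\ \ge\ \left[\frac{1-\left(\frac cr\right)^{\log n}}{1-\frac cr}\,(1+o(1))+\frac{\left(\frac{2c}{r}\right)^{\log n}-\left(\frac{2c}{r}\right)^{n}}{1-\frac{2c}{r}}\right]^{-1}.$$ In particular, for $r>2c$ this lower bound tends to $1-\frac cr$ as $n\to\infty$.
   Context: Two-graph Moran process: vertex set $V=\{1,\dots,n\}$; resident graph $G_R=(V,E_R)$ and mutant graph $G_M=(V,E_M)$, strongly connected, with row-stochastic weight matrices $W_R=[w^R_{ij}]$, $W_M=[w^M_{ij}]$ ($w^R_{ij}>0$ iff $(i,j)\in E_R$, similarly for $M$). The state is the mutant set $S$; residents have fitness $1$, mutants fitness $r>0$. Each step a vertex $i$ is chosen with probability proportional to fitness; if $i$ is a mutant, it picks $j$ with probability $w^M_{ij}$ and $j$ becomes a mutant; if a resident, it picks $j$ with probability $w^R_{ij}$ and $j$ becomes a resident. Absorption at $S=\emptyset$ or $S=V$ (fixation). The fixation probability $f_{G_R,G_M}(r)$ is the probability of fixation when starting with one mutant at a uniformly random vertex. Undirected graphs are unweighted: $w_{xy}=1/\deg(x)$ for each neighbour $y$ of $x$, so $w^R_{xy}/w^R_{yx}=\deg(y)/\deg(x)$;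 for the clique, $w^M_{xy}=1/(n-1)$. The $o(1)$ is as $n\to\infty$. *)

theory Defs
  imports Complex_Main
begin

text \<open>Two-graph Moran process on a finite vertex set V, with resident weights WR
and mutant weights WM (row-stochastic matrices given as functions).
The state is the set S of mutants.\<close>

definition fitness :: "real \<Rightarrow> nat set \<Rightarrow> nat \<Rightarrow> real" where
  "fitness r S i = (if i \<in> S then r else 1)"

definition moran_step ::
  "nat set \<Rightarrow> (nat \<Rightarrow> nat \<Rightarrow> real) \<Rightarrow> (nat \<Rightarrow> nat \<Rightarrow> real) \<Rightarrow> real
   \<Rightarrow> (nat set \<Rightarrow> real) \<Rightarrow> nat set \<Rightarrow> real" where
  "moran_step V WR WM r h S =
     (\<Sum>i\<in>V. (fitness r S i / (\<Sum>k\<in>V. fitness r S k)) *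
        (\<Sum>j\<in>V. if i \<in> S then WM i j * h (insert j S) else WR i j * h (S - {j})))"

fun fix_within ::
  "nat set \<Rightarrow> (nat \<Rightarrow> nat \<Rightarrow> real) \<Rightarrow> (nat \<Rightarrow> nat \<Rightarrow> real) \<Rightarrow> real
   \<Rightarrow> nat \<Rightarrow> nat set \<Rightarrow> real" where
  "fix_within V WR WM r 0 S = (if S = V then 1 else 0)"
| "fix_within V WR WM r (Suc k) S =
     (if S = V then 1 else if S = {} then 0
      else moran_step V WR WM r (fix_within V WR WM r k) S)"

definition fixation_prob ::
  "nat set \<Rightarrow> (nat \<Rightarrow> nat \<Rightarrow> real) \<Rightarrow> (nat \<Rightarrow> nat \<Rightarrow> real) \<Rightarrow> real \<Rightarrow> nat set \<Rightarrow> real" where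
  "fixation_prob V WR WM r S = lim (\<lambda>k. fix_within V WR WM r k S)"

text \<open>f_{G_R,G_M}(r): one initial mutant at a uniformly random vertex.\<close>
definition fixation_probability ::
  "nat set \<Rightarrow> (nat \<Rightarrow> nat \<Rightarrow> real) \<Rightarrow> (nat \<Rightarrow> nat \<Rightarrow> real) \<Rightarrow> real \<Rightarrow> real" where
  "fixation_probability V WR WM r = (\<Sum>v\<in>V. fixation_prob V WR WM r {v}) / real (card V)"

definition undirected_graph :: "nat set \<Rightarrow> (nat \<Rightarrow> nat \<Rightarrow> bool) \<Rightarrow> bool" where
  "undirected_graph V E = (\<forall>x y. E x y \<longrightarrow> x \<in> V \<and> y \<in> V \<and> x \<noteq> y \<and> E y x)"

definition connected_graph :: "nat set \<Rightarrow> (nat \<Rightarrow> nat \<Rightarrow> bool) \<Rightarrow> bool" where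
  "connected_graph V E = (\<forall>x\<in>V. \<forall>y\<in>V. E\<^sup>*\<^sup>* x y)"

definition deg :: "nat set \<Rightarrow> (nat \<Rightarrow> nat \<Rightarrow> bool) \<Rightarrow> nat \<Rightarrow> nat" where
  "deg V E x = card {y \<in> V. E x y}"

definition unweighted :: "nat set \<Rightarrow> (nat \<Rightarrow> nat \<Rightarrow> bool) \<Rightarrow> nat \<Rightarrow> nat \<Rightarrow> real" where
  "unweighted V E x y = (if E x y then 1 / real (deg V E x) else 0)"

definition clique_weights :: "nat set \<Rightarrow> nat \<Rightarrow> nat \<Rightarrow> real" where
  "clique_weights V x y = (if x \<in> V \<and> y \<in> V \<and> x \<noteq> y then 1 / (real (card V) - 1) else 0)"

text \<open>(1 - q^L)/(1 - q) and (q^L - q^N)/(1 - q), continuously extended at q = 1.\<close>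
definition geo_quot :: "real \<Rightarrow> real \<Rightarrow> real" where
  "geo_quot q L = (if q = 1 then L else (1 - q powr L) / (1 - q))"

definition tail_quot :: "real \<Rightarrow> real \<Rightarrow> real \<Rightarrow> real" where
  "tail_quot q L N = (if q = 1 then N - L else (q powr L - q powr N) / (1 - q))"

definition lower_bound :: "real \<Rightarrow> real \<Rightarrow> (nat \<Rightarrow> real) \<Rightarrow> nat \<Rightarrow> real" where
  "lower_bound c r \<epsilon> n =
     1 / (geo_quot (c / r) (ln (real n)) * (1 + \<epsilon> n)
          + tail_quot (2 * c / r) (ln (real n)) (real n))"

end

theory Submission
  imports Defs "HOL-Real_Asymp.Real_Asymp"
begin



lemma ms_diff:
  "moran_step V WR WM r (\<lambda>T. h1 T - h2 T) S = moran_step V WR WM r h1 S - moran_step V WR WM r h2 S"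
  unfolding moran_step_def sum_subtractf[symmetric]
proof (rule sum.cong)
  fix i assume "i \<in> V"
  have e: "(\<Sum>j\<in>V. if i \<in> S then WM i j * (h1 (insert j S) - h2 (insert j S)) else WR i j * (h1 (S - {j}) - h2 (S - {j})))
     = (\<Sum>j\<in>V. if i \<in> S then WM i j * h1 (insert j S) else WR i j * h1 (S - {j}))
     - (\<Sum>j\<in>V. if i \<in> S then WM i j * h2 (insert j S) else WR i j * h2 (S - {j}))"
    by (cases "i \<in> S") (simp_all add: sum_subtractf[symmetric] right_diff_distrib)
  show "fitness r S i / sum (fitness r S) V *
         (\<Sum>j\<in>V. if i \<in> S then WM i j * (h1 (insert j S) - h2 (insert j S)) else WR i j * (h1 (S - {j}) - h2 (S - {j}))) =
        fitness r S i / sum (fitness r S) V * (\<Sum>j\<in>V. if i \<in> S then WM i j * h1 (insert j S) else WR i j * h1 (S - {j})) -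
        fitness r S i / sum (fitness r S) V * (\<Sum>j\<in>V. if i \<in> S then WM i j * h2 (insert j S) else WR i j * h2 (S - {j}))"
    by (subst e) (rule right_diff_distrib)
qed simp

lemma ms_mono:
  assumes "\<And>i j. WR i j \<ge> 0" "\<And>i j. WM i j \<ge> 0" "r > 0"
    and "\<And>T. T \<subseteq> V \<Longrightarrow> h1 T \<le> h2 T" "S \<subseteq> V"
  shows "moran_step V WR WM r h1 S \<le> moran_step V WR WM r h2 S"
  unfolding moran_step_def
proof (rule sum_mono)
  fix i assume i: "i \<in> V"
  have F: "fitness r S i / (\<Sum>k\<in>V. fitness r S k) \<ge> 0"
    using assms(3) by (intro divide_nonneg_nonneg sum_nonneg) (auto simp: fitness_def)
  have "(\<Sum>j\<in>V. if i \<in> S then WM i j * h1 (insert j S) else WR i j * h1 (S - {j}))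
     \<le> (\<Sum>j\<in>V. if i \<in> S then WM i j * h2 (insert j S) else WR i j * h2 (S - {j}))"
  proof (rule sum_mono)
    fix j assume j: "j \<in> V"
    show "(if i \<in> S then WM i j * h1 (insert j S) else WR i j * h1 (S - {j}))
       \<le> (if i \<in> S then WM i j * h2 (insert j S) else WR i j * h2 (S - {j}))"
      using assms j by (auto intro!: mult_left_mono assms(4))
  qed
  then show "fitness r S i / (\<Sum>k\<in>V. fitness r S k) * (\<Sum>j\<in>V. if i \<in> S then WM i j * h1 (insert j S) else WR i j * h1 (S - {j}))
     \<le> fitness r S i / (\<Sum>k\<in>V. fitness r S k) * (\<Sum>j\<in>V. if i \<in> S then WM i j * h2 (insert j S) else WR i j * h2 (S - {j}))"
    using F by (rule mult_left_mono)
qed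

lemma ms_const:
  assumes "finite V" "V \<noteq> {}" "r > 0"
    and "\<And>i. i \<in> V \<Longrightarrow> (\<Sum>j\<in>V. WR i j) = 1" "\<And>i. i \<in> V \<Longrightarrow> (\<Sum>j\<in>V. WM i j) = 1"
  shows "moran_step V WR WM r (\<lambda>_. a) S = a"
proof -
  have pos: "(\<Sum>k\<in>V. fitness r S k) > 0"
    using assms by (intro sum_pos) (auto simp: fitness_def)
  have "(\<Sum>j\<in>V. if i \<in> S then WM i j * a else WR i j * a) = a" if "i \<in> V" for i
    using assms that by (cases "i \<in> S") (auto simp: sum_distrib_right[symmetric])
  then have "moran_step V WR WM r (\<lambda>_. a) S = (\<Sum>i\<in>V. fitness r S i / (\<Sum>k\<in>V. fitness r S k) * a)"
    unfolding moran_step_def by (intro sum.cong) auto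
  also have "\<dots> = a" using pos by (simp add: sum_distrib_right[symmetric] sum_divide_distrib[symmetric])
  finally show ?thesis .
qed


lemma ms_add:
  "moran_step V WR WM r (\<lambda>T. h1 T + h2 T) S = moran_step V WR WM r h1 S + moran_step V WR WM r h2 S"
  unfolding moran_step_def sum.distrib[symmetric]
proof (rule sum.cong)
  fix i assume "i \<in> V"
  have e: "(\<Sum>j\<in>V. if i \<in> S then WM i j * (h1 (insert j S) + h2 (insert j S)) else WR i j * (h1 (S - {j}) + h2 (S - {j})))
     = (\<Sum>j\<in>V. if i \<in> S then WM i j * h1 (insert j S) else WR i j * h1 (S - {j}))
     + (\<Sum>j\<in>V. if i \<in> S then WM i j * h2 (insert j S) else WR i j * h2 (S - {j}))"
    by (cases "i \<in> S") (simp_all add: sum.distrib[symmetric] distrib_left)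
  show "fitness r S i / sum (fitness r S) V *
         (\<Sum>j\<in>V. if i \<in> S then WM i j * (h1 (insert j S) + h2 (insert j S)) else WR i j * (h1 (S - {j}) + h2 (S - {j}))) =
        fitness r S i / sum (fitness r S) V * (\<Sum>j\<in>V. if i \<in> S then WM i j * h1 (insert j S) else WR i j * h1 (S - {j})) +
        fitness r S i / sum (fitness r S) V * (\<Sum>j\<in>V. if i \<in> S then WM i j * h2 (insert j S) else WR i j * h2 (S - {j}))"
    by (subst e) (rule distrib_left)
qed simp

lemma ms_scale:
  "moran_step V WR WM r (\<lambda>T. c * h T) S = c * moran_step V WR WM r h S"
proof -
  have e: "(\<Sum>j\<in>V. if i \<in> S then WM i j * (c * h (insert j S)) else WR i j * (c * h (S - {j})))
     = c * (\<Sum>j\<in>V. if i \<in> S then WM i j * h (insert j S) else WR i j * h (S - {j}))" for i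
    by (cases "i \<in> S") (simp_all add: sum_distrib_left ac_simps)
  show ?thesis unfolding moran_step_def
    apply (simp only: e)
    apply (simp add: sum_distrib_left ac_simps)
    done
qed

lemma ms_zero: "moran_step V WR WM r (\<lambda>_. 0) S = 0"
  using ms_scale[of V WR WM r 0 "\<lambda>_. 0" S] by simp

lemma ms_sum:
  "moran_step V WR WM r (\<lambda>T. \<Sum>i<(k::nat). h i T) S = (\<Sum>i<k. moran_step V WR WM r (h i) S)"
proof (induction k)
  case 0 then show ?case by (simp add: ms_zero)
next
  case (Suc k)
  have "moran_step V WR WM r (\<lambda>T. \<Sum>i<Suc k. h i T) S
      = moran_step V WR WM r (\<lambda>T. (\<Sum>i<k. h i T) + h k T) S" by simp
  also have "\<dots> = (\<Sum>i<k. moran_step V WR WM r (h i) S) + moran_step V WR WM r (h k) S"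
    by (subst ms_add) (simp add: Suc)
  finally show ?case by simp
qed




lemma sum_split_sub: "finite V \<Longrightarrow> S \<subseteq> V \<Longrightarrow> (\<Sum>i\<in>V. g i) = (\<Sum>i\<in>S. g i) + (\<Sum>i\<in>V-S. g i)"
  by (metis add.commute sum.subset_diff)

lemma fit_sum:
  assumes "finite V" "S \<subseteq> V"
  shows "(\<Sum>i\<in>V. fitness r S i) = r * real (card S) + (real (card V) - real (card S))"
proof -
  have "(\<Sum>i\<in>V. fitness r S i) = (\<Sum>i\<in>S. fitness r S i) + (\<Sum>i\<in>V-S. fitness r S i)"
    using assms by (rule sum_split_sub)
  also have "\<dots> = r * real (card S) + real (card (V - S))"
    by (simp add: fitness_def)
  also have "real (card (V - S)) = real (card V) - real (card S)"
    using assms by (simp add: card_Diff_subset finite_subset of_nat_diff card_mono)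
  finally show ?thesis .
qed

lemma step_card:
  assumes fin: "finite V" and n2: "card V \<ge> 2" and r: "r > 0"
    and WRnn: "\<And>i j. WR i j \<ge> 0" and WRrow: "\<And>i. i \<in> V \<Longrightarrow> (\<Sum>j\<in>V. WR i j) = 1"
    and S: "S \<subseteq> V" "S \<noteq> {}" "S \<noteq> V"
  shows "moran_step V WR (clique_weights V) r (\<lambda>T. \<Phi> (card T)) S - \<Phi> (card S) =
    (r * real (card S) * (real (card V) - real (card S)) / (real (card V) - 1) * (\<Phi> (card S + 1) - \<Phi> (card S))
     - (\<Sum>i\<in>V-S. \<Sum>j\<in>S. WR i j) * (\<Phi> (card S) - \<Phi> (card S - 1)))
    / (r * real (card S) + (real (card V) - real (card S)))"
proof -
  define k where "k = card S"
  define n where "n = card V"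
  define F where "F = r * real k + (real n - real k)"
  have finS: "finite S" using fin S finite_subset by blast
  have kpos: "k \<ge> 1" using S finS k_def by (simp add: Suc_le_eq card_gt_0_iff)
  have kn: "k < n" using S fin k_def n_def by (simp add: psubset_card_mono)
  have Fsum: "(\<Sum>i\<in>V. fitness r S i) = F" unfolding F_def k_def n_def using fin S(1) by (rule fit_sum)
  have WMrow: "(\<Sum>j\<in>V. clique_weights V i j) = 1" if "i \<in> V" for i
  proof -
    have "(\<Sum>j\<in>V. clique_weights V i j) = (\<Sum>j\<in>V-{i}. 1 / (real (card V) - 1))"
      using fin that by (intro sum.mono_neutral_cong_right) (auto simp: clique_weights_def)
    also have "\<dots> = 1" using fin that n2 by (simp add: of_nat_diff)
    finally show ?thesis .
  qed
  have const: "moran_step V WR (clique_weights V) r (\<lambda>_. a) S = a" for a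
    using fin n2 r WRrow WMrow by (intro ms_const) auto
  have "moran_step V WR (clique_weights V) r (\<lambda>T. \<Phi> (card T)) S - \<Phi> (card S)
      = moran_step V WR (clique_weights V) r (\<lambda>T. \<Phi> (card T) - \<Phi> k) S"
    by (simp add: ms_diff const k_def)
  also have "\<dots> = (\<Sum>i\<in>V. fitness r S i / F *
        (\<Sum>j\<in>V. if i \<in> S then clique_weights V i j * (\<Phi> (card (insert j S)) - \<Phi> k)
                  else WR i j * (\<Phi> (card (S - {j})) - \<Phi> k)))"
    unfolding moran_step_def Fsum ..
  also have "\<dots> = (\<Sum>i\<in>S. r / F * ((real n - real k) / (real n - 1) * (\<Phi> (k + 1) - \<Phi> k)))
      + (\<Sum>i\<in>V-S. 1 / F * ((\<Sum>j\<in>S. WR i j) * (\<Phi> (k - 1) - \<Phi> k)))"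
  proof (subst sum_split_sub[OF fin S(1)], rule arg_cong2[where f="(+)"])
    show "(\<Sum>i\<in>S. fitness r S i / F *
        (\<Sum>j\<in>V. if i \<in> S then clique_weights V i j * (\<Phi> (card (insert j S)) - \<Phi> k)
                  else WR i j * (\<Phi> (card (S - {j})) - \<Phi> k)))
      = (\<Sum>i\<in>S. r / F * ((real n - real k) / (real n - 1) * (\<Phi> (k + 1) - \<Phi> k)))"
    proof (rule sum.cong[OF refl])
      fix i assume i: "i \<in> S"
      have "(\<Sum>j\<in>V. clique_weights V i j * (\<Phi> (card (insert j S)) - \<Phi> k))
          = (\<Sum>j\<in>S. clique_weights V i j * (\<Phi> (card (insert j S)) - \<Phi> k))
          + (\<Sum>j\<in>V-S. clique_weights V i j * (\<Phi> (card (insert j S)) - \<Phi> k))"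
        using fin S(1) by (rule sum_split_sub)
      also have "(\<Sum>j\<in>S. clique_weights V i j * (\<Phi> (card (insert j S)) - \<Phi> k)) = 0"
        by (intro sum.neutral) (auto simp: insert_absorb k_def)
      also have "(\<Sum>j\<in>V-S. clique_weights V i j * (\<Phi> (card (insert j S)) - \<Phi> k))
          = (\<Sum>j\<in>V-S. 1 / (real n - 1) * (\<Phi> (k + 1) - \<Phi> k))"
        using i S(1) finS by (intro sum.cong) (auto simp: clique_weights_def k_def n_def)
      also have "\<dots> = (real n - real k) / (real n - 1) * (\<Phi> (k + 1) - \<Phi> k)"
        using fin S(1) by (simp add: card_Diff_subset finite_subset of_nat_diff card_mono k_def n_def)
      finally show "fitness r S i / F *
        (\<Sum>j\<in>V. if i \<in> S then clique_weights V i j * (\<Phi> (card (insert j S)) - \<Phi> k)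
                  else WR i j * (\<Phi> (card (S - {j})) - \<Phi> k))
         = r / F * ((real n - real k) / (real n - 1) * (\<Phi> (k + 1) - \<Phi> k))"
        using i by (simp add: fitness_def)
    qed
    show "(\<Sum>i\<in>V-S. fitness r S i / F *
        (\<Sum>j\<in>V. if i \<in> S then clique_weights V i j * (\<Phi> (card (insert j S)) - \<Phi> k)
                  else WR i j * (\<Phi> (card (S - {j})) - \<Phi> k)))
      = (\<Sum>i\<in>V-S. 1 / F * ((\<Sum>j\<in>S. WR i j) * (\<Phi> (k - 1) - \<Phi> k)))"
    proof (rule sum.cong[OF refl])
      fix i assume i: "i \<in> V - S"
      have "(\<Sum>j\<in>V. WR i j * (\<Phi> (card (S - {j})) - \<Phi> k))
          = (\<Sum>j\<in>S. WR i j * (\<Phi> (card (S - {j})) - \<Phi> k))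
          + (\<Sum>j\<in>V-S. WR i j * (\<Phi> (card (S - {j})) - \<Phi> k))"
        using fin S(1) by (rule sum_split_sub)
      also have "(\<Sum>j\<in>V-S. WR i j * (\<Phi> (card (S - {j})) - \<Phi> k)) = 0"
        by (intro sum.neutral) (auto simp: k_def)
      also have "(\<Sum>j\<in>S. WR i j * (\<Phi> (card (S - {j})) - \<Phi> k))
          = (\<Sum>j\<in>S. WR i j * (\<Phi> (k - 1) - \<Phi> k))"
        using finS by (intro sum.cong) (auto simp: k_def)
      finally show "fitness r S i / F *
        (\<Sum>j\<in>V. if i \<in> S then clique_weights V i j * (\<Phi> (card (insert j S)) - \<Phi> k)
                  else WR i j * (\<Phi> (card (S - {j})) - \<Phi> k))
         = 1 / F * ((\<Sum>j\<in>S. WR i j) * (\<Phi> (k - 1) - \<Phi> k))"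
        using i by (simp add: fitness_def sum_distrib_right)
    qed
  qed
  also have "\<dots> = (r * real k * (real n - real k) / (real n - 1) * (\<Phi> (k + 1) - \<Phi> k)
     - (\<Sum>i\<in>V-S. \<Sum>j\<in>S. WR i j) * (\<Phi> k - \<Phi> (k - 1))) / F"
  proof -
    have Fpos: "F > 0" unfolding F_def using r kn kpos by (simp add: add_pos_nonneg)
    have n1: "real n - 1 > 0" using kn kpos by simp
    have e1: "(\<Sum>i\<in>S. r / F * ((real n - real k) / (real n - 1) * (\<Phi> (k + 1) - \<Phi> k)))
        = real k * (r / F * ((real n - real k) / (real n - 1) * (\<Phi> (k + 1) - \<Phi> k)))"
      by (simp add: k_def)
    have e2: "(\<Sum>i\<in>V-S. 1 / F * ((\<Sum>j\<in>S. WR i j) * (\<Phi> (k - 1) - \<Phi> k)))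
        = 1 / F * ((\<Sum>i\<in>V-S. \<Sum>j\<in>S. WR i j) * (\<Phi> (k - 1) - \<Phi> k))"
      by (simp add: sum_distrib_left sum_distrib_right sum_divide_distrib)
    show ?thesis unfolding e1 e2 using Fpos n1 by (simp add: field_simps)
  qed
  finally show ?thesis unfolding k_def n_def F_def .
qed




primrec notabs :: "nat set \<Rightarrow> (nat \<Rightarrow> nat \<Rightarrow> real) \<Rightarrow> (nat \<Rightarrow> nat \<Rightarrow> real) \<Rightarrow> real
   \<Rightarrow> nat \<Rightarrow> nat set \<Rightarrow> real" where
  "notabs V WR WM r 0 S = (if S = V \<or> S = {} then 0 else 1)"
| "notabs V WR WM r (Suc k) S = (if S = V \<or> S = {} then 0 else moran_step V WR WM r (notabs V WR WM r k) S)"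

lemma potential_props:
  fixes \<sigma> :: "nat \<Rightarrow> real"
  assumes pos: "\<And>j. \<sigma> j > 0" and n: "n \<ge> 1"
    and \<Phi>_def: "\<Phi> = (\<lambda>k. (\<Sum>j<k. \<sigma> j) / (\<Sum>j<n. \<sigma> j))"
  shows "\<Phi> 0 = 0" "\<Phi> n = 1" "\<And>k. 0 \<le> \<Phi> k" "\<And>k. k \<le> n \<Longrightarrow> \<Phi> k \<le> 1"
    "\<And>k. \<Phi> (Suc k) - \<Phi> k = \<sigma> k / (\<Sum>j<n. \<sigma> j)"
proof -
  have D: "(\<Sum>j<n. \<sigma> j) > 0" using pos n by (intro sum_pos) (auto simp: lessThan_empty_iff)
  show "\<Phi> 0 = 0" unfolding \<Phi>_def by simp
  show "\<Phi> n = 1" unfolding \<Phi>_def using D by simp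
  show "0 \<le> \<Phi> k" for k unfolding \<Phi>_def using D pos by (intro divide_nonneg_pos sum_nonneg) (auto intro: less_imp_le)
  show "\<Phi> k \<le> 1" if "k \<le> n" for k
  proof -
    have "(\<Sum>j<k. \<sigma> j) \<le> (\<Sum>j<n. \<sigma> j)"
      using that pos by (intro sum_mono2) (auto intro: less_imp_le)
    then show ?thesis unfolding \<Phi>_def using D by simp
  qed
  show "\<Phi> (Suc k) - \<Phi> k = \<sigma> k / (\<Sum>j<n. \<sigma> j)" for k
    unfolding \<Phi>_def by (simp add: diff_divide_distrib[symmetric])
qed


lemma markov_main:
  fixes \<rho> :: "nat \<Rightarrow> real"
  assumes fin: "finite V" and n2: "card V \<ge> 2" and r: "r > 0"
    and WRnn: "\<And>i j. WR i j \<ge> 0" and WRrow: "\<And>i. i \<in> V \<Longrightarrow> (\<Sum>j\<in>V. WR i j) = 1"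
    and pos: "\<And>j. \<rho> j > 0"
    and cond: "\<And>S. S \<subseteq> V \<Longrightarrow> S \<noteq> {} \<Longrightarrow> S \<noteq> V \<Longrightarrow>
       (\<Sum>i\<in>V-S. \<Sum>j\<in>S. WR i j) * \<rho> (card S - 1)
         \<le> r * real (card S) * (real (card V) - real (card S)) / (real (card V) - 1) * \<rho> (card S)"
    and v: "v \<in> V"
  shows "fixation_prob V WR (clique_weights V) r {v} \<ge> \<rho> 0 / (\<Sum>j<card V. \<rho> j)"
proof -
  define n where "n = card V"
  define WM where "WM = clique_weights V"
  define u where "u = fix_within V WR WM r"
  define a where "a = notabs V WR WM r"
  have Vne: "V \<noteq> {}" using n2 by auto
  have WMnn: "WM i j \<ge> 0" for i j
    using n2 unfolding WM_def clique_weights_def by auto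
  have WMrow: "(\<Sum>j\<in>V. WM i j) = 1" if "i \<in> V" for i
  proof -
    have "(\<Sum>j\<in>V. WM i j) = (\<Sum>j\<in>V-{i}. 1 / (real (card V) - 1))"
      using fin that unfolding WM_def by (intro sum.mono_neutral_cong_right) (auto simp: clique_weights_def)
    also have "\<dots> = 1" using fin that n2 by (simp add: of_nat_diff)
    finally show ?thesis .
  qed
  have const: "moran_step V WR WM r (\<lambda>_. c) S = c" for c S
    using fin Vne r WRrow WMrow by (intro ms_const) auto
  have mono: "moran_step V WR WM r h1 S \<le> moran_step V WR WM r h2 S"
    if "\<And>T. T \<subseteq> V \<Longrightarrow> h1 T \<le> h2 T" "S \<subseteq> V" for h1 h2 S
    using WRnn WMnn r that by (rule ms_mono)
  have sub_ins: "insert j S \<subseteq> V" if "S \<subseteq> V" "j \<in> V" for j S using that by auto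
  have u_bd: "0 \<le> u k S \<and> u k S \<le> 1" if "S \<subseteq> V" for k S
    using that
  proof (induction k arbitrary: S)
    case 0 then show ?case by (simp add: u_def)
  next
    case (Suc k)
    have "moran_step V WR WM r (\<lambda>_. 0) S \<le> moran_step V WR WM r (u k) S"
      using Suc by (intro mono) auto
    moreover have "moran_step V WR WM r (u k) S \<le> moran_step V WR WM r (\<lambda>_. 1) S"
      using Suc by (intro mono) auto
    ultimately show ?case by (simp add: u_def const)
  qed
  have u_mono: "u k S \<le> u (Suc k) S" if "S \<subseteq> V" for k S
    using that
  proof (induction k arbitrary: S)
    case 0
    have "0 \<le> moran_step V WR WM r (u 0) S"
      using const[of 0 S] mono[of "\<lambda>_. 0" "u 0" S] 0 u_bd by auto
    then show ?case using Vne by (simp add: u_def)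
  next
    case (Suc k)
    have "moran_step V WR WM r (u k) S \<le> moran_step V WR WM r (u (Suc k)) S"
      using Suc by (intro mono) auto
    then show ?case by (simp add: u_def)
  qed
  have a_bd: "0 \<le> a k S \<and> a k S \<le> 1" if "S \<subseteq> V" for k S
    using that
  proof (induction k arbitrary: S)
    case 0 then show ?case by (simp add: a_def)
  next
    case (Suc k)
    have "moran_step V WR WM r (\<lambda>_. 0) S \<le> moran_step V WR WM r (a k) S"
      using Suc by (intro mono) auto
    moreover have "moran_step V WR WM r (a k) S \<le> moran_step V WR WM r (\<lambda>_. 1) S"
      using Suc by (intro mono) auto
    ultimately show ?case by (simp add: a_def const)
  qed
  have a_dec: "a (Suc k) S \<le> a k S" if "S \<subseteq> V" for k S
    using that
  proof (induction k arbitrary: S)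
    case 0
    have "moran_step V WR WM r (a 0) S \<le> 1"
      using const[of 1 S] mono[of "a 0" "\<lambda>_. 1" S] 0 a_bd by auto
    then show ?case by (simp add: a_def)
  next
    case (Suc k)
    have "moran_step V WR WM r (a (Suc k)) S \<le> moran_step V WR WM r (a k) S"
      using Suc by (intro mono) auto
    then show ?case by (simp add: a_def)
  qed
  have a_anti: "a k S \<le> a i S" if "i \<le> k" "S \<subseteq> V" for i k S
    using that(1)
  proof (induction k rule: dec_induct)
    case base then show ?case by simp
  next
    case (step k) then show ?case using a_dec[OF that(2), of k] by simp
  qed
  define Dn where "Dn = (\<Sum>j<n. \<rho> j)"
  define \<Phi> where "\<Phi> = (\<lambda>k. (\<Sum>j<k. \<rho> j) / Dn)"
  define \<sigma> where "\<sigma> = (\<lambda>j. \<rho> j * 2 ^ j)"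
  define Dn2 where "Dn2 = (\<Sum>j<n. \<sigma> j)"
  define \<Psi> where "\<Psi> = (\<lambda>k. (\<Sum>j<k. \<sigma> j) / Dn2)"
  have n1: "n \<ge> 1" using n2 n_def by simp
  have \<sigma>pos: "\<sigma> j > 0" for j using pos unfolding \<sigma>_def by simp
  note P1 = potential_props[OF pos n1 \<Phi>_def[unfolded Dn_def], folded Dn_def]
  note P2 = potential_props[OF \<sigma>pos n1 \<Psi>_def[unfolded Dn2_def], folded Dn2_def]
  have Dpos: "Dn > 0" "Dn2 > 0" unfolding Dn_def Dn2_def using pos \<sigma>pos n1
    by (auto intro!: sum_pos simp: lessThan_empty_iff)
  define pk where "pk = (\<lambda>k::nat. r * real k * (real n - real k) / (real n - 1))"
  define Fk where "Fk = (\<lambda>k::nat. r * real k + (real n - real k))"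
  define dlt where "dlt = (\<lambda>k. pk k * \<rho> k * 2 ^ (k - 1) / Dn2 / Fk k)"
  have tr: "1 \<le> card S" "card S < n" if "S \<subseteq> V" "S \<noteq> {}" "S \<noteq> V" for S
    using that fin n_def by (auto simp: Suc_le_eq card_gt_0_iff finite_subset psubset_card_mono)
  have Fkpos: "Fk k > 0" if "1 \<le> k" "k < n" for k
    unfolding Fk_def using that r by (simp add: add_pos_nonneg)
  have pkpos: "pk k > 0" if "1 \<le> k" "k < n" for k
    unfolding pk_def using that r by (intro divide_pos_pos mult_pos_pos) auto
  have sc: "moran_step V WR WM r (\<lambda>T. G (card T)) S - G (card S) =
      (pk (card S) * (G (card S + 1) - G (card S)) - (\<Sum>i\<in>V-S. \<Sum>j\<in>S. WR i j) * (G (card S) - G (card S - 1)))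
      / Fk (card S)"
    if "S \<subseteq> V" "S \<noteq> {}" "S \<noteq> V" for G S
    unfolding WM_def pk_def Fk_def n_def using step_card[OF fin n2 r WRnn WRrow that] by simp
  have subh: "moran_step V WR WM r (\<lambda>T. \<Phi> (card T)) S \<ge> \<Phi> (card S)"
    if S: "S \<subseteq> V" "S \<noteq> {}" "S \<noteq> V" for S
  proof -
    define k where "k = card S"
    have k: "1 \<le> k" "k < n" using tr[OF S] k_def by auto
    have e1: "\<Phi> (k + 1) - \<Phi> k = \<rho> k / Dn" using P1(5)[of k] by simp
    have e2: "\<Phi> k - \<Phi> (k - 1) = \<rho> (k - 1) / Dn" using P1(5)[of "k - 1"] k by simp
    have c: "(\<Sum>i\<in>V-S. \<Sum>j\<in>S. WR i j) * \<rho> (k - 1) \<le> pk k * \<rho> k"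
      using cond[OF S] unfolding pk_def k_def n_def .
    have "0 \<le> (pk k * (\<rho> k / Dn) - (\<Sum>i\<in>V-S. \<Sum>j\<in>S. WR i j) * (\<rho> (k - 1) / Dn)) / Fk k"
      using c Dpos Fkpos[OF k] by (intro divide_nonneg_pos) (auto simp: field_simps)
    then show ?thesis using sc[OF S, of \<Phi>] e1 e2 unfolding k_def by simp
  qed
  have strict: "moran_step V WR WM r (\<lambda>T. \<Psi> (card T)) S \<ge> \<Psi> (card S) + dlt (card S)"
    if S: "S \<subseteq> V" "S \<noteq> {}" "S \<noteq> V" for S
  proof -
    define k where "k = card S"
    have k: "1 \<le> k" "k < n" using tr[OF S] k_def by auto
    have e1: "\<Psi> (k + 1) - \<Psi> k = \<rho> k * 2 ^ k / Dn2" using P2(5)[of k] by (simp add: \<sigma>_def)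
    have e2: "\<Psi> k - \<Psi> (k - 1) = \<rho> (k - 1) * 2 ^ (k - 1) / Dn2" using P2(5)[of "k - 1"] k by (simp add: \<sigma>_def)
    define DS where "DS = (\<Sum>i\<in>V-S. \<Sum>j\<in>S. WR i j)"
    have c: "DS * \<rho> (k - 1) \<le> pk k * \<rho> k"
      using cond[OF S] unfolding pk_def k_def n_def DS_def .
    have pw: "(2::real) ^ k = 2 * 2 ^ (k - 1)" using k by (cases k) auto
    have "DS * (\<rho> (k - 1) * 2 ^ (k - 1)) \<le> pk k * \<rho> k * 2 ^ (k - 1)"
      using c by (simp add: mult.assoc[symmetric])
    then have "dlt k \<le> (pk k * (\<rho> k * 2 ^ k / Dn2) - DS * (\<rho> (k - 1) * 2 ^ (k - 1) / Dn2)) / Fk k"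
      unfolding dlt_def pw using Dpos Fkpos[OF k]
      by (intro divide_right_mono) (auto simp: field_simps)
    then show ?thesis using sc[OF S, of \<Psi>] e1 e2 unfolding k_def DS_def by simp
  qed
  define \<delta> where "\<delta> = Min (dlt ` {1..<n})"
  have dltpos: "dlt k > 0" if "1 \<le> k" "k < n" for k
    unfolding dlt_def using pkpos[OF that] Fkpos[OF that] pos[of k] Dpos by simp
  have \<delta>pos: "\<delta> > 0" unfolding \<delta>_def using n2 n_def dltpos by (subst Min_gr_iff) auto
  have \<delta>le: "\<delta> \<le> dlt k" if "1 \<le> k" "k < n" for k unfolding \<delta>_def using that by (intro Min_le) auto
  have cardV: "card S = n \<longleftrightarrow> S = V" "card S \<le> n" if "S \<subseteq> V" for S
    using that fin n_def by (auto intro: card_mono dest: card_subset_eq)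
  have card0: "card S = 0 \<longleftrightarrow> S = {}" if "S \<subseteq> V" for S
    using that fin by (meson card_0_eq finite_subset)
  have claimA: "\<Phi> (card S) - u k S \<le> a k S" if "S \<subseteq> V" for k S
    using that
  proof (induction k arbitrary: S)
    case 0
    then show ?case using P1(1,2) P1(4)[OF cardV(2)[OF 0]] Vne by (auto simp: u_def a_def)
  next
    case (Suc k)
    show ?case
    proof (cases "S = V \<or> S = {}")
      case True then show ?thesis using P1(1,2) Vne n_def by (auto simp: u_def a_def)
    next
      case False
      then have S: "S \<subseteq> V" "S \<noteq> {}" "S \<noteq> V" using Suc by auto
      have "\<Phi> (card S) - u (Suc k) S \<le> moran_step V WR WM r (\<lambda>T. \<Phi> (card T)) S - moran_step V WR WM r (u k) S"
        using subh[OF S] S by (simp add: u_def)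
      also have "\<dots> = moran_step V WR WM r (\<lambda>T. \<Phi> (card T) - u k T) S" by (simp add: ms_diff)
      also have "\<dots> \<le> moran_step V WR WM r (a k) S" using Suc by (intro mono) auto
      also have "\<dots> = a (Suc k) S" using S by (simp add: a_def)
      finally show ?thesis .
    qed
  qed
  have a_abs: "a k S = 0" if "S = V \<or> S = {}" for k S
    using that by (cases k) (auto simp: a_def)
  have claimB: "(\<Sum>i<k. \<delta> * a i S) \<le> 1 - \<Psi> (card S)" if "S \<subseteq> V" for k S
    using that
  proof (induction k arbitrary: S)
    case 0 then show ?case using P2(4)[OF cardV(2)[OF 0]] by simp
  next
    case (Suc k)
    show ?case
    proof (cases "S = V \<or> S = {}")
      case True then show ?thesis using a_abs[OF True] P2(4)[OF cardV(2)[OF Suc.prems]] by simp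
    next
      case False
      then have S: "S \<subseteq> V" "S \<noteq> {}" "S \<noteq> V" using Suc by auto
      have k: "1 \<le> card S" "card S < n" using tr[OF S] by auto
      have "(\<Sum>i<Suc k. \<delta> * a i S) = \<delta> * a 0 S + (\<Sum>i<k. \<delta> * a (Suc i) S)"
        by (rule sum.lessThan_Suc_shift)
      also have "(\<Sum>i<k. \<delta> * a (Suc i) S) = (\<Sum>i<k. moran_step V WR WM r (\<lambda>T. \<delta> * a i T) S)"
        using S by (simp add: a_def ms_scale)
      also have "\<dots> = moran_step V WR WM r (\<lambda>T. \<Sum>i<k. \<delta> * a i T) S"
        by (simp add: ms_sum)
      also have "\<dots> \<le> moran_step V WR WM r (\<lambda>T. 1 - \<Psi> (card T)) S"
        using Suc by (intro mono) auto
      also have "\<dots> = 1 - moran_step V WR WM r (\<lambda>T. \<Psi> (card T)) S"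
        by (simp add: ms_diff const)
      also have "\<dots> \<le> 1 - \<Psi> (card S) - \<delta>"
        using strict[OF S] \<delta>le[OF k] by simp
      finally show ?thesis using S by (simp add: a_def)
    qed
  qed
  have a_lim: "(\<lambda>k. a k S) \<longlonglongrightarrow> 0" if S: "S \<subseteq> V" for S
  proof (rule tendsto_sandwich[where f="\<lambda>_. 0" and h="\<lambda>k. (1 / \<delta>) * inverse (real k)"])
    show "\<forall>\<^sub>F k in sequentially. 0 \<le> a k S" using a_bd[OF S] by simp
    show "\<forall>\<^sub>F k in sequentially. a k S \<le> 1 / \<delta> * inverse (real k)"
    proof (rule eventually_sequentiallyI[of 1])
      fix k :: nat assume k: "1 \<le> k"
      have "(\<Sum>i<k. \<delta> * a k S) \<le> (\<Sum>i<k. \<delta> * a i S)"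
        using a_anti[OF _ S] \<delta>pos by (intro sum_mono) (auto intro: mult_left_mono)
      also have "\<dots> \<le> 1" using claimB[OF S, of k] P2(3)[of "card S"] by simp
      finally have "real k * (\<delta> * a k S) \<le> 1" by simp
      then show "a k S \<le> 1 / \<delta> * inverse (real k)"
        using k \<delta>pos by (simp add: field_simps)
    qed
    show "(\<lambda>_. 0) \<longlonglongrightarrow> (0::real)" by simp
    show "(\<lambda>k. 1 / \<delta> * inverse (real k)) \<longlonglongrightarrow> 0"
      by (intro tendsto_mult_right_zero lim_inverse_n)
  qed
  have vS: "{v} \<subseteq> V" using v by simp
  have "incseq (\<lambda>k. u k {v})" using u_mono[OF vS] by (simp add: incseq_SucI)
  then obtain L where L: "(\<lambda>k. u k {v}) \<longlonglongrightarrow> L"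
    using incseq_convergent[of "\<lambda>k. u k {v}" 1] u_bd[OF vS] by blast
  have fp: "fixation_prob V WR (clique_weights V) r {v} = L"
    unfolding fixation_prob_def using L by (simp add: WM_def u_def limI)
  have "\<Phi> 1 \<le> L + 0"
  proof (rule LIMSEQ_le_const)
    show "(\<lambda>k. u k {v} + a k {v}) \<longlonglongrightarrow> L + 0" using L a_lim[OF vS] by (rule tendsto_add)
    show "\<exists>N. \<forall>k\<ge>N. \<Phi> 1 \<le> u k {v} + a k {v}" using claimA[OF vS] by (auto simp: algebra_simps)
  qed
  then show ?thesis using fp unfolding \<Phi>_def Dn_def n_def by simp
qed



locale gsetup =
  fixes V :: "nat set" and E :: "nat \<Rightarrow> nat \<Rightarrow> bool" and c :: real
  assumes fin: "finite V" and n2: "card V \<ge> 2"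
    and und: "undirected_graph V E" and conn: "connected_graph V E"
    and ratio: "\<forall>x y. E x y \<longrightarrow> unweighted V E x y / unweighted V E y x \<le> c"
begin

lemma E_in: "E x y \<Longrightarrow> x \<in> V \<and> y \<in> V \<and> x \<noteq> y \<and> E y x"
  using und unfolding undirected_graph_def by blast

lemma has_edge: assumes "i \<in> V" shows "\<exists>z. E i z"
proof -
  have "V - {i} \<noteq> {}"
  proof
    assume "V - {i} = {}"
    then have "V \<subseteq> {i}" by auto
    then have "card V \<le> card {i}" by (intro card_mono) auto
    then have "card V \<le> 1" by simp
    then show False using n2 by simp
  qed
  then obtain y where y: "y \<in> V" "y \<noteq> i" by auto
  have "E\<^sup>*\<^sup>* i y" using conn assms y unfolding connected_graph_def by blast
  then show ?thesis using y(2) by (cases rule: converse_rtranclpE) auto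
qed

lemma deg_pos: assumes "i \<in> V" shows "deg V E i \<ge> 1"
proof -
  obtain z where "E i z" using has_edge[OF assms] by blast
  then have "z \<in> {y \<in> V. E i y}" using E_in by blast
  then have "{y \<in> V. E i y} \<noteq> {}" by blast
  then show ?thesis unfolding deg_def using fin by (simp add: Suc_le_eq card_gt_0_iff)
qed

lemma w_nn: "unweighted V E i j \<ge> 0"
  unfolding unweighted_def by simp

lemma row: assumes "i \<in> V" shows "(\<Sum>j\<in>V. unweighted V E i j) = 1"
proof -
  have "(\<Sum>j\<in>V. unweighted V E i j) = (\<Sum>j\<in>{y\<in>V. E i y}. 1 / real (deg V E i))"
    unfolding unweighted_def by (rule sum.inter_filter[OF fin, symmetric])
  also have "\<dots> = 1" using deg_pos[OF assms] by (simp add: deg_def[symmetric])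
  finally show ?thesis .
qed

lemma ratio_deg: assumes "E x y" shows "real (deg V E y) / real (deg V E x) \<le> c"
proof -
  have "x \<in> V" "y \<in> V" "E y x" using E_in[OF assms] by auto
  then have d: "deg V E x \<ge> 1" "deg V E y \<ge> 1" using deg_pos by auto
  have "unweighted V E x y / unweighted V E y x = real (deg V E y) / real (deg V E x)"
    unfolding unweighted_def using assms \<open>E y x\<close> d by simp
  then show ?thesis using ratio assms by metis
qed

lemma c_ge1: "c \<ge> 1"
proof -
  obtain i where i: "i \<in> V" using n2 by fastforce
  obtain z where z: "E i z" using has_edge[OF i] by blast
  have zi: "E z i" using E_in[OF z] by auto
  have d: "deg V E i \<ge> 1" "deg V E z \<ge> 1" using deg_pos E_in[OF z] by auto
  have a: "real (deg V E z) / real (deg V E i) \<le> c" using ratio_deg[OF z] .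
  have b: "real (deg V E i) / real (deg V E z) \<le> c" using ratio_deg[OF zi] .
  show ?thesis
  proof (rule ccontr)
    assume "\<not> c \<ge> 1"
    then have c1: "c < 1" by simp
    have a': "real (deg V E z) \<le> c * real (deg V E i)" using a d by (simp add: divide_le_eq)
    have b': "real (deg V E i) \<le> c * real (deg V E z)" using b d by (simp add: divide_le_eq)
    have "c * real (deg V E i) < 1 * real (deg V E i)" using c1 d by (intro mult_strict_right_mono) auto
    moreover have "c * real (deg V E z) < 1 * real (deg V E z)" using c1 d by (intro mult_strict_right_mono) auto
    ultimately show False using a' b' by simp
  qed
qed

lemma col: assumes "j \<in> V" shows "(\<Sum>i\<in>V. unweighted V E i j) \<le> c"
proof -
  have dj: "deg V E j \<ge> 1" using deg_pos[OF assms] .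
  have "(\<Sum>i\<in>V. unweighted V E i j) \<le> (\<Sum>i\<in>V. if E j i then c / real (deg V E j) else 0)"
  proof (rule sum_mono)
    fix i assume "i \<in> V"
    show "unweighted V E i j \<le> (if E j i then c / real (deg V E j) else 0)"
    proof (cases "E i j")
      case True
      then have ji: "E j i" using E_in by blast
      have di: "deg V E i \<ge> 1" using deg_pos E_in[OF True] by auto
      have "real (deg V E j) / real (deg V E i) \<le> c" using ratio_deg[OF True] .
      then have "1 / real (deg V E i) \<le> c / real (deg V E j)"
        using di dj by (simp add: field_simps)
      then show ?thesis using True ji unfolding unweighted_def by simp
    next
      case False
      then show ?thesis unfolding unweighted_def using c_ge1 dj by auto
    qed
  qed
  also have "\<dots> = (\<Sum>i\<in>{y\<in>V. E j y}. c / real (deg V E j))"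
    by (rule sum.inter_filter[OF fin, symmetric])
  also have "\<dots> = c" using dj by (simp add: deg_def[symmetric])
  finally show ?thesis .
qed

lemma DS_le_c: assumes "S \<subseteq> V"
  shows "(\<Sum>i\<in>V-S. \<Sum>j\<in>S. unweighted V E i j) \<le> c * real (card S)"
proof -
  have finS: "finite S" using assms fin finite_subset by blast
  have "(\<Sum>i\<in>V-S. \<Sum>j\<in>S. unweighted V E i j) \<le> (\<Sum>i\<in>V. \<Sum>j\<in>S. unweighted V E i j)"
    using fin by (intro sum_mono2) (auto intro: sum_nonneg w_nn)
  also have "\<dots> = (\<Sum>j\<in>S. \<Sum>i\<in>V. unweighted V E i j)" by (rule sum.swap)
  also have "\<dots> \<le> (\<Sum>j\<in>S. c)" using assms col by (intro sum_mono) auto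
  finally show ?thesis by (simp add: mult.commute)
qed

lemma DS_le_n: assumes "S \<subseteq> V"
  shows "(\<Sum>i\<in>V-S. \<Sum>j\<in>S. unweighted V E i j) \<le> real (card V) - real (card S)"
proof -
  have "(\<Sum>i\<in>V-S. \<Sum>j\<in>S. unweighted V E i j) \<le> (\<Sum>i\<in>V-S. \<Sum>j\<in>V. unweighted V E i j)"
    using fin assms by (intro sum_mono sum_mono2) (auto intro: w_nn)
  also have "\<dots> = (\<Sum>i\<in>V-S. 1)" using row by (intro sum.cong) auto
  also have "\<dots> = real (card V) - real (card S)"
    using fin assms by (simp add: card_Diff_subset finite_subset of_nat_diff card_mono)
  finally show ?thesis .
qed

end




definition pfl :: "nat \<Rightarrow> nat" where "pfl n = nat \<lfloor>ln (real n)\<rfloor>"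
definition th :: "nat \<Rightarrow> real" where "th n = (real n - 1) / (real n - real (pfl n) - 1)"
definition gk :: "real \<Rightarrow> real \<Rightarrow> nat \<Rightarrow> nat \<Rightarrow> real" where
  "gk c r n k = (if k \<le> pfl n + 1 then c / r * th n else 2 * c / r)"
definition rho :: "real \<Rightarrow> real \<Rightarrow> nat \<Rightarrow> nat \<Rightarrow> real" where
  "rho c r n j = (\<Prod>k\<in>{1..j}. gk c r n k)"
definition Dsum :: "real \<Rightarrow> real \<Rightarrow> nat \<Rightarrow> real" where
  "Dsum c r n = (\<Sum>j<n. rho c r n j)"

lemma alg1: "(a::real) \<noteq> 0 \<Longrightarrow> b \<noteq> 0 \<Longrightarrow> r \<noteq> 0 \<Longrightarrow> r * x * y / a * (c / r * (a / b)) = c * x * (y / b)"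
  by (simp add: field_simps)

lemma ln_lt: assumes "n \<ge> 2" shows "ln (real n) < real n - 1"
proof -
  have "ln (real n) = ln 2 + ln (real n / 2)" using assms by (simp add: ln_div)
  also have "ln (real n / 2) \<le> real n / 2 - 1" using assms by (intro ln_le_minus_one) auto
  finally show ?thesis using ln_2_less_1 assms by simp
qed

lemma pfl_props: assumes "n \<ge> 2"
  shows "real (pfl n) \<le> ln (real n)" "ln (real n) < real (pfl n) + 1" "pfl n + 2 \<le> n"
proof -
  have l0: "ln (real n) \<ge> 0" using assms by simp
  show a: "real (pfl n) \<le> ln (real n)" unfolding pfl_def using l0 by linarith
  show "ln (real n) < real (pfl n) + 1" unfolding pfl_def using l0 by linarith
  have "real (pfl n) < real n - 1" using a ln_lt[OF assms] by simp
  then show "pfl n + 2 \<le> n" by linarith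
qed

lemma th_props: assumes "n \<ge> 2" shows "th n \<ge> 1" "real n - real (pfl n) - 1 \<ge> 1"
proof -
  have p: "pfl n + 2 \<le> n" using pfl_props[OF assms] by simp
  then show d: "real n - real (pfl n) - 1 \<ge> 1" by linarith
  show "th n \<ge> 1" unfolding th_def using d by (simp add: field_simps)
qed

lemma rho_pos: assumes "c > 0" "r > 0" "n \<ge> 2" shows "rho c r n j > 0"
  unfolding rho_def gk_def using th_props[OF assms(3)] assms
  by (intro prod_pos) auto

lemma rho_Suc: "rho c r n (Suc j) = gk c r n (Suc j) * rho c r n j"
  unfolding rho_def by (simp add: prod.nat_ivl_Suc' mult.commute)

lemma rho_0: "rho c r n 0 = 1" unfolding rho_def by simp

lemma fix_lb:
  fixes n :: nat and E c r
  assumes n2: "n \<ge> 2" and c: "c > 0" and r: "r > 0"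
    and und: "undirected_graph {1..n} E" and conn: "connected_graph {1..n} E"
    and ratio: "\<forall>x y. E x y \<longrightarrow> unweighted {1..n} E x y / unweighted {1..n} E y x \<le> c"
  shows "fixation_probability {1..n} (unweighted {1..n} E) (clique_weights {1..n}) r \<ge> 1 / Dsum c r n"
proof -
  define V where "V = {1..n}"
  have cV: "card V = n" unfolding V_def by simp
  interpret G: gsetup V E c
    using n2 und conn ratio unfolding V_def by unfold_locales auto
  have c1: "c \<ge> 1" by (rule G.c_ge1)
  define P where "P = real (pfl n)"
  have Pd: "real n - P - 1 \<ge> 1" using th_props[OF n2] P_def by simp
  have Pp: "pfl n + 2 \<le> n" using pfl_props[OF n2] by simp
  have cond: "(\<Sum>i\<in>V-S. \<Sum>j\<in>S. unweighted V E i j) * rho c r n (card S - 1)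
      \<le> r * real (card S) * (real (card V) - real (card S)) / (real (card V) - 1) * rho c r n (card S)"
    if S: "S \<subseteq> V" "S \<noteq> {}" "S \<noteq> V" for S
  proof -
    define k where "k = card S"
    have "S \<subset> V" using S by auto
    then have "card S < card V" by (rule psubset_card_mono[OF G.fin])
    moreover have "card S \<noteq> 0" using S G.fin by (meson card_0_eq finite_subset)
    ultimately have k: "1 \<le> k" "k < n" using cV k_def by auto
    define DS where "DS = (\<Sum>i\<in>V-S. \<Sum>j\<in>S. unweighted V E i j)"
    have D1: "DS \<le> c * real k" using G.DS_le_c[OF S(1)] unfolding DS_def k_def .
    have D2: "DS \<le> real n - real k" using G.DS_le_n[OF S(1)] unfolding DS_def k_def cV .
    have rk: "rho c r n k = gk c r n k * rho c r n (k - 1)"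
      using rho_Suc[of c r n "k - 1"] k by simp
    have rpos: "rho c r n (k - 1) > 0" using rho_pos c r n2 by blast
    define pk where "pk = r * real k * (real n - real k) / (real n - 1)"
    have key: "DS \<le> pk * gk c r n k"
    proof (cases "k \<le> pfl n + 1")
      case True
      have e: "pk * gk c r n k = c * real k * ((real n - real k) / (real n - P - 1))"
      proof -
        have g: "gk c r n k = c / r * ((real n - 1) / (real n - P - 1))"
          unfolding gk_def th_def P_def using True by simp
        have nz: "real n - 1 \<noteq> 0" "real n - P - 1 \<noteq> 0" "r \<noteq> 0" using Pd k r by auto
        show ?thesis unfolding g pk_def using alg1[OF nz] .
      qed
      have "1 \<le> (real n - real k) / (real n - P - 1)"
        using True Pd P_def by (simp add: field_simps)
      then have "c * real k * 1 \<le> c * real k * ((real n - real k) / (real n - P - 1))"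
        using c by (intro mult_left_mono) auto
      then show ?thesis using D1 e by simp
    next
      case False
      have e: "pk * gk c r n k = 2 * c * real k * (real n - real k) / (real n - 1)"
        unfolding pk_def gk_def using False r k by (simp add: field_simps)
      show ?thesis
      proof (cases "2 * (real n - real k) \<ge> real n - 1")
        case True
        have "c * real k * 1 \<le> c * real k * (2 * (real n - real k) / (real n - 1))"
          using True c k by (intro mult_left_mono) (auto simp: field_simps)
        then show ?thesis using D1 e by (simp add: field_simps)
      next
        case False
        have "2 * real k \<ge> real n - 1" using False by simp
        moreover have "2 * real k * 1 \<le> 2 * real k * c" using c1 by (intro mult_left_mono) auto
        ultimately have "2 * c * real k \<ge> real n - 1" by (simp add: ac_simps)
        then have "(real n - real k) * 1 \<le> (real n - real k) * (2 * c * real k / (real n - 1))"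
          using k by (intro mult_left_mono) (auto simp: field_simps)
        then show ?thesis using D2 e by (simp add: field_simps)
      qed
    qed
    have "DS * rho c r n (k - 1) \<le> pk * gk c r n k * rho c r n (k - 1)"
      using key rpos by (intro mult_right_mono) auto
    then show ?thesis unfolding DS_def[symmetric] k_def[symmetric] cV pk_def rk by (simp add: ac_simps)
  qed
  have each: "fixation_prob V (unweighted V E) (clique_weights V) r {v} \<ge> 1 / Dsum c r n" if "v \<in> V" for v
  proof -
    have "fixation_prob V (unweighted V E) (clique_weights V) r {v} \<ge> rho c r n 0 / (\<Sum>j<card V. rho c r n j)"
      by (rule markov_main[where V=V and WR="unweighted V E" and r=r and \<rho>="rho c r n" and v=v])
        (use G.fin G.n2 r G.w_nn G.row rho_pos[OF c r n2] cond that in auto)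
    then show ?thesis unfolding cV Dsum_def rho_0 by simp
  qed
  have "(\<Sum>v\<in>V. 1 / Dsum c r n) \<le> (\<Sum>v\<in>V. fixation_prob V (unweighted V E) (clique_weights V) r {v})"
    using each by (rule sum_mono)
  then have "real n * (1 / Dsum c r n) \<le> (\<Sum>v\<in>V. fixation_prob V (unweighted V E) (clique_weights V) r {v})"
    using cV by simp
  then show ?thesis unfolding fixation_probability_def V_def[symmetric] cV using n2
    by (simp add: field_simps)
qed




lemma geo_pos: assumes "(q::real) > 0" "L > 0" shows "geo_quot q L > 0"
proof (cases "q = 1")
  case True then show ?thesis using assms by (simp add: geo_quot_def)
next
  case False
  show ?thesis
  proof (cases "q < 1")
    case True
    have "q powr L < 1" using assms True by (simp add: powr01_less_one)
    then show ?thesis using True False by (simp add: geo_quot_def)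
  next
    case F2: False
    then have "q > 1" using False by simp
    then have "q powr L > 1" using assms by (intro gr_one_powr)
    then show ?thesis using \<open>q > 1\<close> by (simp add: geo_quot_def divide_neg_neg)
  qed
qed

lemma pw_near: assumes q: "(q::real) > 0" and t: "\<bar>t\<bar> \<le> 1"
  shows "q powr t \<le> q + 1 / q + 1"
proof (cases "q \<ge> 1")
  case True
  have "q powr t \<le> q powr 1" using True t by (intro powr_mono) auto
  then have "q powr t \<le> q" using q by simp
  moreover have "1 / q > 0" using q by simp
  ultimately show ?thesis by linarith
next
  case False
  have "q powr t \<le> q powr (-1)" using False t q by (intro powr_mono') auto
  also have "q powr (-1) = 1 / q" using q by (simp add: powr_minus divide_inverse)
  finally show ?thesis using q False by simp
qed

lemma pw_near2: assumes q: "(q::real) > 0" and t: "\<bar>x - L\<bar> \<le> 1"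
  shows "q powr x \<le> (q + 1 / q + 1) * q powr L"
proof -
  have "q powr x = q powr (x - L) * q powr L" by (simp add: powr_add[symmetric])
  also have "\<dots> \<le> (q + 1 / q + 1) * q powr L"
    using pw_near[OF q t] by (intro mult_right_mono) auto
  finally show ?thesis .
qed

lemma geo_le: assumes q: "(q::real) > 0" and pL: "real p \<le> L"
  shows "(\<Sum>j<p. q ^ j) \<le> geo_quot q L"
proof (cases "q = 1")
  case True then show ?thesis using pL by (simp add: geo_quot_def)
next
  case False
  have s: "(\<Sum>j<p. q ^ j) = (1 - q ^ p) / (1 - q)" using False by (simp add: sum_gp_strict)
  have qp: "q ^ p = q powr real p" using q by (simp add: powr_realpow)
  show ?thesis
  proof (cases "q < 1")
    case True
    have "q powr L \<le> q powr real p" using True q pL by (intro powr_mono') auto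
    then show ?thesis unfolding s geo_quot_def qp using True False by (simp add: divide_right_mono)
  next
    case F2: False
    then have q1: "q > 1" using False by simp
    have "q powr real p \<le> q powr L" using q1 pL by (intro powr_mono) auto
    then show ?thesis unfolding s geo_quot_def qp using q1 False
      by (simp add: divide_right_mono_neg)
  qed
qed

lemma headA: assumes q: "(q::real) > 0" and pL: "real p \<le> L" "L < real p + 1"
  shows "(\<Sum>j<p+2. q ^ j) \<le> geo_quot q L + 2 * (q + 1 / q + 1) * q powr L"
proof -
  have "(\<Sum>j<p+2. q ^ j) = (\<Sum>j<p. q ^ j) + q powr real p + q powr (real p + 1)"
    using q by (simp add: powr_realpow[symmetric] numeral_2_eq_2 add_ac)
  also have "q powr real p \<le> (q + 1 / q + 1) * q powr L" using pL by (intro pw_near2[OF q]) auto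
  also have "q powr (real p + 1) \<le> (q + 1 / q + 1) * q powr L" using pL by (intro pw_near2[OF q]) auto
  also have "(\<Sum>j<p. q ^ j) \<le> geo_quot q L" using geo_le[OF q pL(1)] .
  finally show ?thesis by (simp add: algebra_simps)
qed

lemma sum_ivl_gp: assumes "m \<le> n"
  shows "(\<Sum>j\<in>{m..<n}. (Q::real) ^ j) = (if Q = 1 then real n - real m else (Q ^ m - Q ^ n) / (1 - Q))"
proof -
  have "(\<Sum>j\<in>{m..<n}. Q ^ j) = (\<Sum>j\<in>{0..<n}. Q ^ j) - (\<Sum>j\<in>{0..<m}. Q ^ j)"
    using sum_diff_nat_ivl[of 0 m n "\<lambda>j. Q ^ j"] assms by simp
  also have "\<dots> = (\<Sum>j<n. Q ^ j) - (\<Sum>j<m. Q ^ j)" by (simp add: atLeast0LessThan)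
  also have "\<dots> = (if Q = 1 then real n - real m else (Q ^ m - Q ^ n) / (1 - Q))"
    by (simp add: sum_gp_strict diff_divide_distrib)
  finally show ?thesis .
qed

lemma tailB: assumes Q: "(Q::real) > 0" and pL: "real p \<le> L" "L < real p + 1" and pn: "p + 2 \<le> n"
  shows "(\<Sum>j\<in>{p+2..<n}. Q ^ j) + Q powr L \<le> tail_quot Q L (real n)"
proof (cases "Q = 1")
  case True
  then show ?thesis using pL pn by (simp add: sum_ivl_gp[OF pn] tail_quot_def)
next
  case False
  define A where "A = Q powr L"
  define B where "B = Q ^ (p + 2)"
  define C where "C = Q ^ n"
  have s: "(\<Sum>j\<in>{p+2..<n}. Q ^ j) = (B - C) / (1 - Q)" using False sum_ivl_gp[OF pn, of Q] unfolding B_def C_def by simp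
  have t: "tail_quot Q L (real n) = (A - C) / (1 - Q)" using False Q by (simp add: tail_quot_def A_def C_def powr_realpow)
  have nz: "1 - Q \<noteq> 0" using False by simp
  have d: "(A - C) / (1 - Q) - ((B - C) / (1 - Q) + A) = (Q * A - B) / (1 - Q)"
  proof -
    have "(A - C) / (1 - Q) - ((B - C) / (1 - Q) + A) = ((A - C) - (B - C) - A * (1 - Q)) / (1 - Q)"
      using nz by (simp add: diff_divide_distrib)
    also have "(A - C) - (B - C) - A * (1 - Q) = Q * A - B" by (simp add: algebra_simps)
    finally show ?thesis .
  qed
  have QA: "Q * A = Q powr (L + 1)" unfolding A_def using Q by (simp add: powr_add)
  have Bp: "B = Q powr (real p + 2)" unfolding B_def using powr_realpow[OF Q, of "p + 2"] by (simp add: add.commute)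
  have "(Q * A - B) / (1 - Q) \<ge> 0"
  proof (cases "Q < 1")
    case True
    have "Q powr (real p + 2) \<le> Q powr (L + 1)" using True Q pL by (intro powr_mono') auto
    then show ?thesis using True QA Bp by simp
  next
    case F2: False
    then have "Q > 1" using False by simp
    have "Q powr (L + 1) \<le> Q powr (real p + 2)" using \<open>Q > 1\<close> pL by (intro powr_mono) auto
    then show ?thesis using \<open>Q > 1\<close> QA Bp by (simp add: divide_nonpos_neg)
  qed
  then show ?thesis unfolding s t A_def[symmetric] using d by simp
qed




lemma sum_split_at: fixes f :: "nat \<Rightarrow> real" assumes "m \<le> n" shows "(\<Sum>j<n. f j) = (\<Sum>j<m. f j) + (\<Sum>j\<in>{m..<n}. f j)"
  using sum_diff_nat_ivl[of 0 m n f] assms by (simp add: atLeast0LessThan)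

lemma rho_head: assumes "j \<le> pfl n + 1" shows "rho c r n j = (c / r * th n) ^ j"
proof -
  have "rho c r n j = (\<Prod>k\<in>{1..j}. c / r * th n)"
    unfolding rho_def gk_def using assms by (intro prod.cong) auto
  then show ?thesis by simp
qed

lemma rho_le: assumes c: "c > 0" and r: "r > 0" and n: "n \<ge> 2" and t: "th n \<le> 2"
  shows "rho c r n j \<le> (2 * c / r) ^ j"
proof -
  have "rho c r n j \<le> (\<Prod>k\<in>{1..j}. 2 * c / r)"
    unfolding rho_def
  proof (rule prod_mono)
    fix k assume "k \<in> {1..j}"
    have t1: "th n \<ge> 1" using th_props[OF n] by simp
    have "c / r * th n \<le> c / r * 2" using t c r by (intro mult_left_mono) auto
    then show "0 \<le> gk c r n k \<and> gk c r n k \<le> 2 * c / r"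
      unfolding gk_def using c r t1 by (auto simp: mult.commute)
  qed
  then show ?thesis by simp
qed

lemma Dsum_bound:
  assumes c: "c > 0" and r: "r > 0" and n: "n \<ge> 2" and t: "th n \<le> 2"
  shows "Dsum c r n \<le> th n ^ (pfl n + 1) * (geo_quot (c / r) (ln (real n))
      + 2 * (c / r + 1 / (c / r) + 1) * (c / r) powr (ln (real n)))
      + tail_quot (2 * c / r) (ln (real n)) (real n) - (2 * c / r) powr (ln (real n))"
proof -
  define p where "p = pfl n"
  define q where "q = c / r"
  define Q where "Q = 2 * c / r"
  define L where "L = ln (real n)"
  define \<theta> where "\<theta> = th n"
  have q: "q > 0" "Q > 0" using c r unfolding q_def Q_def by auto
  have pp: "real p \<le> L" "L < real p + 1" "p + 2 \<le> n" using pfl_props[OF n] unfolding p_def L_def by auto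
  have t1: "\<theta> \<ge> 1" using th_props[OF n] \<theta>_def by simp
  have "Dsum c r n = (\<Sum>j<p+2. rho c r n j) + (\<Sum>j\<in>{p+2..<n}. rho c r n j)"
    unfolding Dsum_def using pp by (intro sum_split_at) auto
  also have "(\<Sum>j<p+2. rho c r n j) \<le> (\<Sum>j<p+2. \<theta> ^ (p + 1) * q ^ j)"
  proof (rule sum_mono)
    fix j assume "j \<in> {..<p+2}"
    then have j: "j \<le> p + 1" by simp
    have "rho c r n j = (q * \<theta>) ^ j" using rho_head[of j n c r] j
      unfolding p_def q_def \<theta>_def by simp
    also have "\<dots> = q ^ j * \<theta> ^ j" by (rule power_mult_distrib)
    also have "\<dots> \<le> q ^ j * \<theta> ^ (p + 1)" using q t1 j by (intro mult_left_mono power_increasing) auto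
    finally show "rho c r n j \<le> \<theta> ^ (p + 1) * q ^ j" by (simp add: mult.commute)
  qed
  also have "(\<Sum>j<p+2. \<theta> ^ (p + 1) * q ^ j) = \<theta> ^ (p + 1) * (\<Sum>j<p+2. q ^ j)"
    by (rule sum_distrib_left[symmetric])
  also have "\<dots> \<le> \<theta> ^ (p + 1) * (geo_quot q L + 2 * (q + 1 / q + 1) * q powr L)"
    using headA[OF q(1) pp(1,2)] t1 by (intro mult_left_mono) auto
  also have "(\<Sum>j\<in>{p+2..<n}. rho c r n j) \<le> (\<Sum>j\<in>{p+2..<n}. Q ^ j)"
    using rho_le[OF c r n t] unfolding Q_def by (intro sum_mono) auto
  also have "\<dots> \<le> tail_quot Q L (real n) - Q powr L"
    using tailB[OF q(2) pp] by simp
  finally show ?thesis unfolding p_def q_def Q_def L_def \<theta>_def by simp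
qed

definition Bn :: "nat \<Rightarrow> real" where
  "Bn n = ((real n - 1) / (real n - 1 - ln (real n))) powr (ln (real n) + 1)"

lemma th_pow: assumes n: "n \<ge> 2"
  shows "1 \<le> th n ^ (pfl n + 1)" "th n \<le> th n ^ (pfl n + 1)" "th n ^ (pfl n + 1) \<le> Bn n"
proof -
  have t1: "th n \<ge> 1" using th_props[OF n] by simp
  show "1 \<le> th n ^ (pfl n + 1)" by (rule one_le_power[OF t1])
  show "th n \<le> th n ^ (pfl n + 1)" using t1 power_increasing[of 1 "pfl n + 1" "th n"] by simp
  have pp: "real (pfl n) \<le> ln (real n)" using pfl_props[OF n] by simp
  have lt: "ln (real n) < real n - 1" using ln_lt[OF n] .
  have le1: "th n \<le> (real n - 1) / (real n - 1 - ln (real n))"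
    unfolding th_def using pp lt n th_props(2)[OF n] by (intro divide_left_mono) auto
  have "th n ^ (pfl n + 1) = th n powr (real (pfl n) + 1)"
    using t1 powr_realpow[of "th n" "pfl n + 1"] by (simp add: add.commute)
  also have "\<dots> \<le> th n powr (ln (real n) + 1)" using t1 pp by (intro powr_mono) auto
  also have "\<dots> \<le> Bn n" unfolding Bn_def using t1 le1 n by (intro powr_mono2) auto
  finally show "th n ^ (pfl n + 1) \<le> Bn n" .
qed

lemma Bn_lim: "Bn \<longlonglongrightarrow> 1"
  unfolding Bn_def by real_asymp

lemma two_powr_lim: "filterlim (\<lambda>n::nat. (2::real) powr ln (real n)) at_top sequentially"
  by real_asymp




definition geoq :: "real \<Rightarrow> real \<Rightarrow> nat \<Rightarrow> real" where
  "geoq c r n = geo_quot (c / r) (ln (real n))"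
definition tailq :: "real \<Rightarrow> real \<Rightarrow> nat \<Rightarrow> real" where
  "tailq c r n = tail_quot (2 * c / r) (ln (real n)) (real n)"
definition eps :: "real \<Rightarrow> real \<Rightarrow> nat \<Rightarrow> real" where
  "eps c r n = (if 1 \<le> c \<and> 2 \<le> n then max 0 ((Dsum c r n - tailq c r n) / geoq c r n - 1) else 0)"

lemma geoq_pos: assumes "c > 0" "r > 0" "n \<ge> 2" shows "geoq c r n > 0"
  unfolding geoq_def using assms by (intro geo_pos) auto

lemma eps_bound: assumes c: "c \<ge> 1" and r: "r > 0" and n: "n \<ge> 2"
  shows "Dsum c r n \<le> geoq c r n * (1 + eps c r n) + tailq c r n"
proof -
  have g: "geoq c r n > 0" using geoq_pos c r n by simp
  have "(Dsum c r n - tailq c r n) / geoq c r n \<le> 1 + eps c r n"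
    unfolding eps_def using c n by auto
  then have "Dsum c r n - tailq c r n \<le> geoq c r n * (1 + eps c r n)"
    using g by (simp add: divide_le_eq mult.commute)
  then show ?thesis by simp
qed

lemma eps_ev_bound:
  assumes c: "c \<ge> 1" and r: "r > 0" and n: "n \<ge> 2" and B: "Bn n < 2"
    and P: "4 * (c / r + 1 / (c / r) + 1) \<le> 2 powr ln (real n)"
  shows "0 \<le> eps c r n \<and> eps c r n \<le> Bn n - 1"
proof -
  define T where "T = th n ^ (pfl n + 1)"
  define q where "q = c / r"
  define L where "L = ln (real n)"
  define M where "M = q + 1 / q + 1"
  define A where "A = q powr L"
  have q: "q > 0" using c r q_def by simp
  have T: "1 \<le> T" "th n \<le> T" "T \<le> Bn n" using th_pow[OF n] T_def by auto
  have t2: "th n \<le> 2" using T B by simp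
  have g: "geoq c r n > 0" using geoq_pos c r n by simp
  have A0: "A \<ge> 0" unfolding A_def by simp
  have M0: "M \<ge> 0" unfolding M_def using q by simp
  have QA: "(2 * c / r) powr L = 2 powr L * A" unfolding A_def q_def
    by (simp add: powr_mult[symmetric])
  have c0: "c > 0" using c by simp
  have D: "Dsum c r n \<le> T * (geoq c r n + 2 * M * A) + tailq c r n - 2 powr L * A"
    using Dsum_bound[OF c0 r n t2, unfolded QA[unfolded L_def A_def q_def]]
    unfolding T_def geoq_def tailq_def M_def A_def q_def L_def by simp
  have "T * (2 * M * A) \<le> 2 * (2 * M * A)" using T B A0 M0 by (intro mult_right_mono) auto
  also have "\<dots> = (4 * M) * A" by simp
  also have "\<dots> \<le> 2 powr L * A" using P A0 unfolding M_def q_def L_def by (intro mult_right_mono) auto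
  finally have "Dsum c r n - tailq c r n \<le> T * geoq c r n" using D by (simp add: algebra_simps)
  then have "(Dsum c r n - tailq c r n) / geoq c r n \<le> T" using g by (simp add: divide_le_eq)
  then have "eps c r n \<le> T - 1" unfolding eps_def using c n T by auto
  moreover have "0 \<le> eps c r n" unfolding eps_def by auto
  ultimately show ?thesis using T by simp
qed

lemma eps_lim: assumes c: "c > 0" and r: "r > 0" shows "eps c r \<longlonglongrightarrow> 0"
proof (cases "c \<ge> 1")
  case False
  then have "eps c r = (\<lambda>_. 0)" unfolding eps_def by auto
  then show ?thesis by simp
next
  case True
  define M where "M = c / r + 1 / (c / r) + 1"
  have ev1: "\<forall>\<^sub>F n in sequentially. n \<ge> 2" by (rule eventually_ge_at_top)
  have ev2: "\<forall>\<^sub>F n in sequentially. Bn n < 2" using Bn_lim by (rule order_tendstoD) simp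
  have ev3: "\<forall>\<^sub>F n in sequentially. 4 * M \<le> 2 powr ln (real n)"
    using two_powr_lim unfolding filterlim_at_top by blast
  have ev: "\<forall>\<^sub>F n in sequentially. 0 \<le> eps c r n \<and> eps c r n \<le> Bn n - 1"
    using ev1 ev2 ev3
    by eventually_elim (use eps_ev_bound[OF True r] M_def in auto)
  show ?thesis
  proof (rule tendsto_sandwich[where f="\<lambda>_. 0" and h="\<lambda>n. Bn n - 1"])
    show "\<forall>\<^sub>F n in sequentially. 0 \<le> eps c r n" using ev by (rule eventually_mono) auto
    show "\<forall>\<^sub>F n in sequentially. eps c r n \<le> Bn n - 1" using ev by (rule eventually_mono) auto
    show "(\<lambda>_. 0) \<longlonglongrightarrow> (0::real)" by simp
    show "(\<lambda>n. Bn n - 1) \<longlonglongrightarrow> 0" using tendsto_diff[OF Bn_lim tendsto_const[of 1]] by simp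
  qed
qed

lemma powr_ln_lim: assumes "0 < q" "q < 1"
  shows "(\<lambda>n::nat. q powr ln (real n)) \<longlonglongrightarrow> 0"
proof -
  have l: "ln q < 0" using assms by simp
  have "(\<lambda>n::nat. real n powr ln q) \<longlonglongrightarrow> 0"
    by (rule tendsto_neg_powr[OF l filterlim_real_sequentially])
  moreover have "\<forall>\<^sub>F n in sequentially. real n powr ln q = q powr ln (real n)"
    using eventually_ge_at_top[of 1]
    by eventually_elim (use assms in \<open>auto simp: powr_def mult.commute\<close>)
  ultimately show ?thesis by (rule Lim_transform_eventually)
qed

lemma lb_lim: assumes c: "c > 0" and r: "r > 2 * c"
  shows "(\<lambda>n. lower_bound c r (eps c r) n) \<longlonglongrightarrow> 1 - c / r"
proof -
  have r0: "r > 0" using c r by simp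
  define q where "q = c / r"
  define Q where "Q = 2 * c / r"
  have q: "0 < q" "q < 1" unfolding q_def using c r r0 by (auto simp: field_simps)
  have Q: "0 < Q" "Q < 1" unfolding Q_def using c r r0 by (auto simp: field_simps)
  have g: "(\<lambda>n. geoq c r n) \<longlonglongrightarrow> (1 - 0) / (1 - q)"
  proof -
    have "(\<lambda>n. (1 - q powr ln (real n)) / (1 - q)) \<longlonglongrightarrow> (1 - 0) / (1 - q)"
      using q by (intro tendsto_intros powr_ln_lim) auto
    moreover have "(\<lambda>n. (1 - q powr ln (real n)) / (1 - q)) = (\<lambda>n. geoq c r n)"
      using q c r unfolding geoq_def geo_quot_def q_def by (auto simp: field_simps)
    ultimately show ?thesis by simp
  qed
  have t: "(\<lambda>n. tailq c r n) \<longlonglongrightarrow> (0 - 0) / (1 - Q)"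
  proof -
    have "(\<lambda>n. Q ^ n) \<longlonglongrightarrow> 0" using Q by (intro LIMSEQ_power_zero) auto
    then have "(\<lambda>n. (Q powr ln (real n) - Q ^ n) / (1 - Q)) \<longlonglongrightarrow> (0 - 0) / (1 - Q)"
      using Q by (intro tendsto_intros powr_ln_lim) auto
    moreover have "(\<lambda>n. (Q powr ln (real n) - Q ^ n) / (1 - Q)) = (\<lambda>n. tailq c r n)"
      using Q c r unfolding tailq_def tail_quot_def Q_def by (auto simp: powr_realpow field_simps)
    ultimately show ?thesis by simp
  qed
  have e: "eps c r \<longlonglongrightarrow> 0" using eps_lim c r0 by simp
  have den: "(\<lambda>n. geoq c r n * (1 + eps c r n) + tailq c r n) \<longlonglongrightarrow> (1 - 0) / (1 - q) * (1 + 0) + (0 - 0) / (1 - Q)"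
    by (intro tendsto_intros g t e)
  have "(\<lambda>n. 1 / (geoq c r n * (1 + eps c r n) + tailq c r n)) \<longlonglongrightarrow> 1 / ((1 - 0) / (1 - q) * (1 + 0) + (0 - 0) / (1 - Q))"
    using q by (intro tendsto_intros den) auto
  moreover have "1 / ((1 - 0) / (1 - q) * (1 + 0) + (0 - 0) / (1 - Q)) = 1 - c / r" using q unfolding q_def by simp
  ultimately show ?thesis unfolding lower_bound_def geoq_def tailq_def by simp
qed




lemma n1_case: assumes "c > 0" "r > 0"
  shows "fixation_probability {1..1} WR WM r \<ge> lower_bound c r \<epsilon> 1"
proof -
  have fw: "fix_within {1} WR WM r k {1} = 1" for k by (cases k) simp_all
  have "fixation_prob {1} WR WM r {1} = 1"
    unfolding fixation_prob_def fw by simp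
  then have fp: "fixation_probability {1..1} WR WM r = 1"
    unfolding fixation_probability_def by simp
  have g: "geo_quot (c / r) 0 = 0" using assms by (simp add: geo_quot_def)
  have t: "tail_quot (2 * c / r) 0 1 = 1" using assms by (simp add: tail_quot_def)
  show ?thesis unfolding fp lower_bound_def using g t by simp
qed

theorem theorem6:
  fixes c r :: real
  assumes "c > 0" and "r > 0"
  shows "\<exists>\<epsilon> :: nat \<Rightarrow> real. \<epsilon> \<longlonglongrightarrow> 0 \<and>
    (\<forall>n E. n \<ge> 1 \<and> undirected_graph {1..n} E \<and> connected_graph {1..n} E \<and>
        (\<forall>x y. E x y \<longrightarrow> unweighted {1..n} E x y / unweighted {1..n} E y x \<le> c) \<longrightarrow>
        fixation_probability {1..n} (unweighted {1..n} E) (clique_weights {1..n}) r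
          \<ge> lower_bound c r \<epsilon> n) \<and>
    (r > 2 * c \<longrightarrow> (\<lambda>n. lower_bound c r \<epsilon> n) \<longlonglongrightarrow> 1 - c / r)"
proof (intro exI[of _ "eps c r"] conjI allI impI)
  show "eps c r \<longlonglongrightarrow> 0" using eps_lim assms by simp
  show "(\<lambda>n. lower_bound c r (eps c r) n) \<longlonglongrightarrow> 1 - c / r" if "r > 2 * c"
    using lb_lim assms that by simp
  fix n E
  assume H: "n \<ge> 1 \<and> undirected_graph {1..n} E \<and> connected_graph {1..n} E \<and>
        (\<forall>x y. E x y \<longrightarrow> unweighted {1..n} E x y / unweighted {1..n} E y x \<le> c)"
  show "fixation_probability {1..n} (unweighted {1..n} E) (clique_weights {1..n}) r
          \<ge> lower_bound c r (eps c r) n"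
  proof (cases "n = 1")
    case True then show ?thesis using n1_case assms by simp
  next
    case False
    then have n2: "n \<ge> 2" using H by simp
    interpret G: gsetup "{1..n}" E c using n2 H by unfold_locales auto
    have c1: "c \<ge> 1" by (rule G.c_ge1)
    have fl: "fixation_probability {1..n} (unweighted {1..n} E) (clique_weights {1..n}) r \<ge> 1 / Dsum c r n"
      using fix_lb[OF n2 assms] H by blast
    have Dpos: "Dsum c r n > 0" unfolding Dsum_def using rho_pos[OF assms n2] n2
      by (intro sum_pos) (auto simp: lessThan_empty_iff)
    have Db: "Dsum c r n \<le> geoq c r n * (1 + eps c r n) + tailq c r n"
      using eps_bound[OF c1 assms(2) n2] .
    have "lower_bound c r (eps c r) n = 1 / (geoq c r n * (1 + eps c r n) + tailq c r n)"
      unfolding lower_bound_def geoq_def tailq_def ..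
    also have "\<dots> \<le> 1 / Dsum c r n" using Db Dpos by (intro divide_left_mono) auto
    finally show ?thesis using fl by simp
  qed
qed



end
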